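(* (Sector condition.) For every $\alpha>0$, $N\ge1$ and every pair of functions $F,H:E_N\to\mathbb R$, $$\langle\mathcal LF,H\rangle_{\mu_N}^2\le 4L^2\,D_N(F)\,D_N(H).$$
   Context: Fix an integer $L\ge2$ and let $\mathbb T_L=\mathbb Z/L\mathbb Z$. Fix $\alpha>0$; set $a(0)=1$, $a(n)=n^\alpha$ for $n\ge1$, $g(0)=0$ and $g(n)=a(n)/a(n-1)$ for $n\ge1$. $E_N=\{\eta\in\{0,1,2,\dots\}^{\mathbb T_L}:\sum_x\eta_x=N\}$; $\sigma^{x,y}\eta$ is obtained from $\eta$ by moving one particle from $x$ to $y$. Generator: $(\mathcal LF)(\eta)=\sum_{x\in\mathbb T_L}g(\eta_x)[F(\sigma^{x,x+1}\eta)-F(\eta)]$. Invariant measure $\mu_N(\eta)=W_N^{-1}\prod_xa(\eta_x)^{-1}$, $W_N=\sum_{\zeta\in E_N}\prod_xa(\zeta_x)^{-1}$; $\langle\cdot,\cdot\rangle_{\mu_N}$ is the $L^2(\mu_N)$ inner product; $D_N(F)=\frac12\sum_x\sum_{\eta\in E_N}\mu_N(\eta)g(\eta_x)[F(\sigma^{x,x+1}\eta)-F(\eta)]^2$. *)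

theory Defs
  imports Complex_Main
begin

text \<open>Torus T_L is represented by sites 0..L-1 with successor (x+1) mod L.
Configurations are functions nat => nat vanishing outside {0..<L}.\<close>

definition a_w :: "real \<Rightarrow> nat \<Rightarrow> real" where
  "a_w \<alpha> n = (if n = 0 then 1 else real n powr \<alpha>)"

definition g_r :: "real \<Rightarrow> nat \<Rightarrow> real" where
  "g_r \<alpha> n = (if n = 0 then 0 else a_w \<alpha> n / a_w \<alpha> (n - 1))"

definition E_conf :: "nat \<Rightarrow> nat \<Rightarrow> (nat \<Rightarrow> nat) set" where
  "E_conf L N = {\<eta>. (\<forall>x\<ge>L. \<eta> x = 0) \<and> (\<Sum>x<L. \<eta> x) = N}"

definition sigma_mv :: "nat \<Rightarrow> nat \<Rightarrow> (nat \<Rightarrow> nat) \<Rightarrow> (nat \<Rightarrow> nat)" where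
  "sigma_mv x y \<eta> = \<eta>(x := \<eta> x - 1, y := \<eta> y + 1)"

definition W_part :: "real \<Rightarrow> nat \<Rightarrow> nat \<Rightarrow> real" where
  "W_part \<alpha> L N = (\<Sum>\<zeta>\<in>E_conf L N. \<Prod>x<L. inverse (a_w \<alpha> (\<zeta> x)))"

definition mu_N :: "real \<Rightarrow> nat \<Rightarrow> nat \<Rightarrow> (nat \<Rightarrow> nat) \<Rightarrow> real" where
  "mu_N \<alpha> L N \<eta> = inverse (W_part \<alpha> L N) * (\<Prod>x<L. inverse (a_w \<alpha> (\<eta> x)))"

definition gen_L :: "real \<Rightarrow> nat \<Rightarrow> ((nat \<Rightarrow> nat) \<Rightarrow> real) \<Rightarrow> (nat \<Rightarrow> nat) \<Rightarrow> real" where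
  "gen_L \<alpha> L F \<eta> = (\<Sum>x<L. g_r \<alpha> (\<eta> x) * (F (sigma_mv x ((x + 1) mod L) \<eta>) - F \<eta>))"

definition inner_mu :: "real \<Rightarrow> nat \<Rightarrow> nat \<Rightarrow> ((nat \<Rightarrow> nat) \<Rightarrow> real) \<Rightarrow> ((nat \<Rightarrow> nat) \<Rightarrow> real) \<Rightarrow> real" where
  "inner_mu \<alpha> L N F H = (\<Sum>\<eta>\<in>E_conf L N. mu_N \<alpha> L N \<eta> * F \<eta> * H \<eta>)"

definition dirichlet :: "real \<Rightarrow> nat \<Rightarrow> nat \<Rightarrow> ((nat \<Rightarrow> nat) \<Rightarrow> real) \<Rightarrow> real" where
  "dirichlet \<alpha> L N F = 1/2 * (\<Sum>x<L. \<Sum>\<eta>\<in>E_conf L N.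
      mu_N \<alpha> L N \<eta> * g_r \<alpha> (\<eta> x) * (F (sigma_mv x ((x + 1) mod L) \<eta>) - F \<eta>)^2)"

end

theory Submission
  imports Defs "HOL-Analysis.Convex"
begin

lemma a_pos: "a_w \<alpha> n > 0"
  by (simp add: a_w_def)

lemma finite_E: "finite (E_conf L N)"
proof -
  have "E_conf L N \<subseteq> (\<lambda>f x. if x < L then f x else 0) ` (PiE {..<L} (\<lambda>_. {..N}))"
  proof
    fix \<eta> assume h: "\<eta> \<in> E_conf L N"
    hence z: "\<forall>x\<ge>L. \<eta> x = 0" and s: "(\<Sum>x<L. \<eta> x) = N" by (auto simp: E_conf_def)
    have "\<eta> x \<le> N" if "x < L" for x
      using member_le_sum[of x "{..<L}" \<eta>] that s by auto
    hence "restrict \<eta> {..<L} \<in> PiE {..<L} (\<lambda>_. {..N})" by auto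
    moreover have "\<eta> = (\<lambda>x. if x < L then restrict \<eta> {..<L} x else 0)"
      using z by (auto simp: fun_eq_iff)
    ultimately show "\<eta> \<in> (\<lambda>f x. if x < L then f x else 0) ` (PiE {..<L} (\<lambda>_. {..N}))" by blast
  qed
  thus ?thesis by (rule finite_subset) (auto intro: finite_PiE)
qed

lemma reindex:
  assumes "x < L" "N \<ge> 1"
  shows "(\<Sum>\<eta>\<in>E_conf L N. g_r \<alpha> (\<eta> x) * \<phi> \<eta>) =
         (\<Sum>\<rho>\<in>E_conf L (N-1). g_r \<alpha> (\<rho> x + 1) * \<phi> (\<rho>(x:=\<rho> x+1)))"
proof -
  let ?e = "\<lambda>\<rho>. \<rho>(x:=\<rho> x+1)"
  have inj: "inj_on ?e (E_conf L (N-1))"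
    by (rule inj_onI) (metis fun_upd_apply fun_upd_triv fun_upd_upd add_right_cancel)
  have img: "?e ` E_conf L (N-1) = {\<eta>\<in>E_conf L N. \<eta> x \<ge> 1}"
  proof (rule set_eqI, rule iffI)
    fix \<eta> assume "\<eta> \<in> ?e ` E_conf L (N-1)"
    then obtain \<rho> where r: "\<rho> \<in> E_conf L (N-1)" "\<eta> = ?e \<rho>" by auto
    have "(\<Sum>y<L. (?e \<rho>) y) = (\<Sum>y<L. \<rho> y) + 1"
      using assms(1) by (simp add: sum.remove[of "{..<L}" x] sum.cong[of _ _ "\<lambda>y. (?e \<rho>) y" \<rho>])
    thus "\<eta> \<in> {\<eta>\<in>E_conf L N. \<eta> x \<ge> 1}" using r assms by (auto simp: E_conf_def)
  next
    fix \<eta> assume h: "\<eta> \<in> {\<eta>\<in>E_conf L N. \<eta> x \<ge> 1}"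
    let ?r = "\<eta>(x := \<eta> x - 1)"
    have "(\<Sum>y<L. \<eta> y) = (\<Sum>y<L. ?r y) + 1"
      using assms(1) h by (simp add: sum.remove[of "{..<L}" x] sum.cong[of _ _ "\<lambda>y. ?r y" \<eta>])
    hence "?r \<in> E_conf L (N-1)" using h assms by (auto simp: E_conf_def)
    moreover have "\<eta> = ?e ?r" using h by auto
    ultimately show "\<eta> \<in> ?e ` E_conf L (N-1)" by blast
  qed
  have "(\<Sum>\<rho>\<in>E_conf L (N-1). g_r \<alpha> (\<rho> x + 1) * \<phi> (?e \<rho>))
      = (\<Sum>\<eta>\<in>?e ` E_conf L (N-1). g_r \<alpha> (\<eta> x) * \<phi> \<eta>)"
    by (subst sum.reindex[OF inj]) simp
  also have "\<dots> = (\<Sum>\<eta>\<in>E_conf L N. g_r \<alpha> (\<eta> x) * \<phi> \<eta>)"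
    unfolding img
    by (rule sum.mono_neutral_left) (auto simp: finite_E g_r_def)
  finally show ?thesis by simp
qed

definition nu :: "real \<Rightarrow> nat \<Rightarrow> nat \<Rightarrow> (nat \<Rightarrow> nat) \<Rightarrow> real" where
  "nu \<alpha> L N \<rho> = inverse (W_part \<alpha> L N) * (\<Prod>z<L. inverse (a_w \<alpha> (\<rho> z)))"

lemma W_nonneg: "W_part \<alpha> L N \<ge> 0"
  unfolding W_part_def by (intro sum_nonneg prod_nonneg) (simp add: less_imp_le a_pos)

lemma nu_nonneg: "nu \<alpha> L N \<rho> \<ge> 0"
  unfolding nu_def using W_nonneg
  by (intro mult_nonneg_nonneg prod_nonneg) (simp_all add: less_imp_le a_pos)

lemma weight:
  assumes "x < L"
  shows "mu_N \<alpha> L N (\<rho>(x:=\<rho> x+1)) * g_r \<alpha> (\<rho> x + 1) = nu \<alpha> L N \<rho>"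
proof -
  have p1: "(\<Prod>z<L. inverse (a_w \<alpha> ((\<rho>(x:=\<rho> x+1)) z)))
     = inverse (a_w \<alpha> (\<rho> x + 1)) * (\<Prod>z\<in>{..<L}-{x}. inverse (a_w \<alpha> (\<rho> z)))"
    using assms by (simp add: prod.remove[of "{..<L}" x])
  have p2: "(\<Prod>z<L. inverse (a_w \<alpha> (\<rho> z)))
     = inverse (a_w \<alpha> (\<rho> x)) * (\<Prod>z\<in>{..<L}-{x}. inverse (a_w \<alpha> (\<rho> z)))"
    using assms by (simp add: prod.remove[of "{..<L}" x])
  have a1: "a_w \<alpha> (\<rho> x + 1) > 0" "a_w \<alpha> (\<rho> x) > 0" by (rule a_pos)+
  show ?thesis unfolding mu_N_def nu_def p1 p2 g_r_def using a1
    by (simp add: field_simps)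
qed

lemma sigma_e:
  assumes "y \<noteq> x"
  shows "sigma_mv x y (\<rho>(x:=\<rho> x+1)) = \<rho>(y:=\<rho> y+1)"
  using assms by (auto simp: sigma_mv_def fun_eq_iff)

lemma transfer:
  assumes "L \<ge> 2" "N \<ge> 1"
  shows "(\<Sum>x<L. \<Sum>\<eta>\<in>E_conf L N. mu_N \<alpha> L N \<eta> * g_r \<alpha> (\<eta> x) * \<Phi> x \<eta> (sigma_mv x ((x + 1) mod L) \<eta>))
   = (\<Sum>\<rho>\<in>E_conf L (N-1). \<Sum>x<L. nu \<alpha> L N \<rho> * \<Phi> x (\<rho>(x:=\<rho> x+1)) (\<rho>((x+1) mod L := \<rho> ((x+1) mod L) + 1)))"
proof -
  have "(\<Sum>\<eta>\<in>E_conf L N. mu_N \<alpha> L N \<eta> * g_r \<alpha> (\<eta> x) * \<Phi> x \<eta> (sigma_mv x ((x + 1) mod L) \<eta>))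
     = (\<Sum>\<rho>\<in>E_conf L (N-1). nu \<alpha> L N \<rho> * \<Phi> x (\<rho>(x:=\<rho> x+1)) (\<rho>((x+1) mod L := \<rho> ((x+1) mod L) + 1)))"
    if x: "x < L" for x
  proof -
    have ne: "(x+1) mod L \<noteq> x"
    proof (cases "x+1 < L")
      case False
      hence "x + 1 = L" using x by simp
      thus ?thesis using assms(1) by auto
    qed simp
    have "(\<Sum>\<eta>\<in>E_conf L N. mu_N \<alpha> L N \<eta> * g_r \<alpha> (\<eta> x) * \<Phi> x \<eta> (sigma_mv x ((x + 1) mod L) \<eta>))
      = (\<Sum>\<eta>\<in>E_conf L N. g_r \<alpha> (\<eta> x) * (mu_N \<alpha> L N \<eta> * \<Phi> x \<eta> (sigma_mv x ((x + 1) mod L) \<eta>)))"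
      by (simp add: algebra_simps)
    also have "\<dots> = (\<Sum>\<rho>\<in>E_conf L (N-1). g_r \<alpha> (\<rho> x + 1) * (mu_N \<alpha> L N (\<rho>(x:=\<rho> x+1)) * \<Phi> x (\<rho>(x:=\<rho> x+1)) (sigma_mv x ((x + 1) mod L) (\<rho>(x:=\<rho> x+1)))))"
      by (rule reindex[OF x assms(2)])
    also have "\<dots> = (\<Sum>\<rho>\<in>E_conf L (N-1). nu \<alpha> L N \<rho> * \<Phi> x (\<rho>(x:=\<rho> x+1)) (\<rho>((x+1) mod L := \<rho> ((x+1) mod L) + 1)))"
    proof (rule sum.cong[OF refl])
      fix \<rho>
      have s: "sigma_mv x ((x + 1) mod L) (\<rho>(x:=\<rho> x+1)) = \<rho>((x+1) mod L := \<rho> ((x+1) mod L) + 1)"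
        by (rule sigma_e[OF ne])
      show "g_r \<alpha> (\<rho> x + 1) * (mu_N \<alpha> L N (\<rho>(x:=\<rho> x+1)) * \<Phi> x (\<rho>(x:=\<rho> x+1)) (sigma_mv x ((x + 1) mod L) (\<rho>(x:=\<rho> x+1))))
         = nu \<alpha> L N \<rho> * \<Phi> x (\<rho>(x:=\<rho> x+1)) (\<rho>((x+1) mod L := \<rho> ((x+1) mod L) + 1))"
        unfolding s weight[OF x, symmetric] by (simp only: mult_ac)
    qed
    finally show ?thesis .
  qed
  hence "(\<Sum>x<L. \<Sum>\<eta>\<in>E_conf L N. mu_N \<alpha> L N \<eta> * g_r \<alpha> (\<eta> x) * \<Phi> x \<eta> (sigma_mv x ((x + 1) mod L) \<eta>))
     = (\<Sum>x<L. \<Sum>\<rho>\<in>E_conf L (N-1). nu \<alpha> L N \<rho> * \<Phi> x (\<rho>(x:=\<rho> x+1)) (\<rho>((x+1) mod L := \<rho> ((x+1) mod L) + 1)))"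
    by (rule sum.cong[OF refl]) auto
  also have "\<dots> = (\<Sum>\<rho>\<in>E_conf L (N-1). \<Sum>x<L. nu \<alpha> L N \<rho> * \<Phi> x (\<rho>(x:=\<rho> x+1)) (\<rho>((x+1) mod L := \<rho> ((x+1) mod L) + 1)))"
    by (rule sum.swap)
  finally show ?thesis .
qed

lemma rot:
  assumes "L \<ge> 1"
  shows "(\<Sum>x<L. (\<phi>::nat\<Rightarrow>real) ((x+1) mod L)) = (\<Sum>x<L. \<phi> x)"
proof -
  obtain m where L: "L = Suc m" using assms by (cases L) auto
  have "(\<Sum>x<Suc m. \<phi> ((x+1) mod Suc m)) = (\<Sum>x<m. \<phi> ((x+1) mod Suc m)) + \<phi> 0"
    by simp
  also have "(\<Sum>x<m. \<phi> ((x+1) mod Suc m)) = (\<Sum>x<m. \<phi> (Suc x))"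
    by (rule sum.cong) auto
  also have "(\<Sum>x<m. \<phi> (Suc x)) + \<phi> 0 = (\<Sum>x<Suc m. \<phi> x)" by (subst sum.lessThan_Suc_shift) simp
  finally show ?thesis unfolding L .
qed

lemma path:
  assumes "L \<ge> 1"
  shows "(\<Sum>x<L. ((h::nat\<Rightarrow>real) x - h 0)^2) \<le> (real L)^2 * (\<Sum>x<L. (h ((x+1) mod L) - h x)^2)"
proof -
  let ?Q = "\<Sum>w<L. (h ((w+1) mod L) - h w)^2"
  have "(h x - h 0)^2 \<le> real L * ?Q" if x: "x < L" for x
  proof -
    have "h x - h 0 = (\<Sum>w<x. h (Suc w) - h w)" by (simp add: sum_lessThan_telescope)
    also have "\<dots> = (\<Sum>w<x. h ((w+1) mod L) - h w)"
      by (rule sum.cong) (use x in auto)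
    finally have "(h x - h 0)^2 \<le> (\<Sum>w<x. (h ((w+1) mod L) - h w)^2) * card {..<x}"
      using sum_squared_le_sum_of_squares by metis
    also have "\<dots> \<le> ?Q * real L"
    proof (rule mult_mono)
      show "(\<Sum>w<x. (h ((w+1) mod L) - h w)^2) \<le> ?Q"
        by (rule sum_mono2) (use x in auto)
      show "0 \<le> ?Q" by (rule sum_nonneg) simp
    qed (use x in auto)
    finally show ?thesis by (simp add: mult.commute)
  qed
  hence "(\<Sum>x<L. (h x - h 0)^2) \<le> (\<Sum>x<L. real L * ?Q)" by (intro sum_mono) auto
  also have "\<dots> = (real L)^2 * ?Q" by (simp add: power2_eq_square)
  finally show ?thesis .
qed

lemma CS2:
  fixes a b :: "'a \<Rightarrow> nat \<Rightarrow> real"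
  shows "(\<Sum>r\<in>A. \<Sum>x<L. a r x * b r x)^2 \<le> (\<Sum>r\<in>A. \<Sum>x<L. (a r x)^2) * (\<Sum>r\<in>A. \<Sum>x<L. (b r x)^2)"
proof (cases "finite A")
  case True
  have c: "(\<Sum>r\<in>A. \<Sum>x<L. f r x) = (\<Sum>p\<in>A \<times> {..<L}. f (fst p) (snd p))" for f :: "'a \<Rightarrow> nat \<Rightarrow> real"
    using True by (simp add: sum.cartesian_product case_prod_beta)
  show ?thesis unfolding c
    by (rule Cauchy_Schwarz_ineq_sum)
qed simp

theorem lemma3p1:
  fixes \<alpha> :: real and L N :: nat and F H :: "(nat \<Rightarrow> nat) \<Rightarrow> real"
  assumes "L \<ge> 2" and "\<alpha> > 0" and "N \<ge> 1"
  shows "(inner_mu \<alpha> L N (gen_L \<alpha> L F) H)^2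
           \<le> 4 * (real L)^2 * dirichlet \<alpha> L N F * dirichlet \<alpha> L N H"
proof -
  let ?P = "E_conf L (N-1)"
  let ?nu = "nu \<alpha> L N"
  define f where "f \<rho> x = F (\<rho>((x+1) mod L := \<rho> ((x+1) mod L) + 1)) - F (\<rho>(x:=\<rho> x+1))" for \<rho> x
  define h where "h \<rho> x = H (\<rho>(x:=\<rho> x+1))" for \<rho> x
  have hs: "h \<rho> ((x+1) mod L) = H (\<rho>((x+1) mod L := \<rho> ((x+1) mod L) + 1))" for \<rho> x
    by (simp add: h_def)
  have I: "inner_mu \<alpha> L N (gen_L \<alpha> L F) H = (\<Sum>\<rho>\<in>?P. \<Sum>x<L. ?nu \<rho> * (f \<rho> x * h \<rho> x))"
  proof -
    have "inner_mu \<alpha> L N (gen_L \<alpha> L F) H = (\<Sum>x<L. \<Sum>\<eta>\<in>E_conf L N. mu_N \<alpha> L N \<eta> * g_r \<alpha> (\<eta> x) *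
        ((\<lambda>x \<eta> \<xi>. (F \<xi> - F \<eta>) * H \<eta>) x \<eta> (sigma_mv x ((x + 1) mod L) \<eta>)))"
    proof -
      have "inner_mu \<alpha> L N (gen_L \<alpha> L F) H = (\<Sum>\<eta>\<in>E_conf L N. \<Sum>x<L. mu_N \<alpha> L N \<eta> * g_r \<alpha> (\<eta> x) *
        ((\<lambda>x \<eta> \<xi>. (F \<xi> - F \<eta>) * H \<eta>) x \<eta> (sigma_mv x ((x + 1) mod L) \<eta>)))"
        unfolding inner_mu_def gen_L_def
        by (rule sum.cong[OF refl]) (simp only: sum_distrib_left sum_distrib_right mult.assoc)
      thus ?thesis by (simp only: sum.swap[of _ "E_conf L N"])
    qed
    also have "\<dots> = (\<Sum>\<rho>\<in>?P. \<Sum>x<L. ?nu \<rho> * (f \<rho> x * h \<rho> x))"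
      by (subst transfer[OF assms(1,3)]) (simp add: f_def h_def)
    finally show ?thesis .
  qed
  have DF: "dirichlet \<alpha> L N F = 1/2 * (\<Sum>\<rho>\<in>?P. \<Sum>x<L. ?nu \<rho> * (f \<rho> x)^2)"
  proof -
    have "dirichlet \<alpha> L N F = 1/2 * (\<Sum>x<L. \<Sum>\<eta>\<in>E_conf L N. mu_N \<alpha> L N \<eta> * g_r \<alpha> (\<eta> x) *
        ((\<lambda>x \<eta> \<xi>. (F \<xi> - F \<eta>)^2) x \<eta> (sigma_mv x ((x + 1) mod L) \<eta>)))"
      unfolding dirichlet_def by simp
    also have "\<dots> = 1/2 * (\<Sum>\<rho>\<in>?P. \<Sum>x<L. ?nu \<rho> * (f \<rho> x)^2)"
      by (subst transfer[OF assms(1,3)]) (simp add: f_def)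
    finally show ?thesis .
  qed
  have DH: "dirichlet \<alpha> L N H = 1/2 * (\<Sum>\<rho>\<in>?P. \<Sum>x<L. ?nu \<rho> * (h \<rho> ((x+1) mod L) - h \<rho> x)^2)"
  proof -
    have "dirichlet \<alpha> L N H = 1/2 * (\<Sum>x<L. \<Sum>\<eta>\<in>E_conf L N. mu_N \<alpha> L N \<eta> * g_r \<alpha> (\<eta> x) *
        ((\<lambda>x \<eta> \<xi>. (H \<xi> - H \<eta>)^2) x \<eta> (sigma_mv x ((x + 1) mod L) \<eta>)))"
      unfolding dirichlet_def by simp
    also have "\<dots> = 1/2 * (\<Sum>\<rho>\<in>?P. \<Sum>x<L. ?nu \<rho> * (h \<rho> ((x+1) mod L) - h \<rho> x)^2)"
      by (subst transfer[OF assms(1,3)]) (simp only: hs h_def)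
    finally show ?thesis .
  qed
  have L1: "L \<ge> 1" using assms(1) by simp
  have fsum: "(\<Sum>x<L. f \<rho> x) = 0" for \<rho>
    unfolding f_def sum_subtractf
    using rot[OF L1, of "\<lambda>y. F (\<rho>(y := \<rho> y + 1))"] by simp
  have I2: "inner_mu \<alpha> L N (gen_L \<alpha> L F) H
      = (\<Sum>\<rho>\<in>?P. \<Sum>x<L. (sqrt (?nu \<rho>) * f \<rho> x) * (sqrt (?nu \<rho>) * (h \<rho> x - h \<rho> 0)))"
  proof -
    have "(\<Sum>x<L. ?nu \<rho> * (f \<rho> x * h \<rho> x)) = (\<Sum>x<L. (sqrt (?nu \<rho>) * f \<rho> x) * (sqrt (?nu \<rho>) * (h \<rho> x - h \<rho> 0)))" for \<rho>
    proof -
      have "(\<Sum>x<L. (sqrt (?nu \<rho>) * f \<rho> x) * (sqrt (?nu \<rho>) * (h \<rho> x - h \<rho> 0)))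
          = (\<Sum>x<L. ?nu \<rho> * (f \<rho> x * h \<rho> x)) - ?nu \<rho> * h \<rho> 0 * (\<Sum>x<L. f \<rho> x)"
        using nu_nonneg[of \<alpha> L N \<rho>] sum_distrib_right[of "f \<rho>" "{..<L}" "h \<rho> 0 * ?nu \<rho>", symmetric]
        by (simp add: algebra_simps sum_subtractf sum_distrib_left real_sqrt_mult_self)
      thus ?thesis using fsum by simp
    qed
    thus ?thesis unfolding I by simp
  qed
  have A: "(\<Sum>\<rho>\<in>?P. \<Sum>x<L. (sqrt (?nu \<rho>) * f \<rho> x)^2) = 2 * dirichlet \<alpha> L N F"
    unfolding DF using nu_nonneg[of \<alpha> L N] by (simp add: power_mult_distrib)
  have B: "(\<Sum>\<rho>\<in>?P. \<Sum>x<L. (sqrt (?nu \<rho>) * (h \<rho> x - h \<rho> 0))^2) \<le> (real L)^2 * (2 * dirichlet \<alpha> L N H)"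
  proof -
    have "(\<Sum>\<rho>\<in>?P. \<Sum>x<L. (sqrt (?nu \<rho>) * (h \<rho> x - h \<rho> 0))^2)
        = (\<Sum>\<rho>\<in>?P. ?nu \<rho> * (\<Sum>x<L. (h \<rho> x - h \<rho> 0)^2))"
      using nu_nonneg[of \<alpha> L N] by (simp add: power_mult_distrib sum_distrib_left)
    also have "\<dots> \<le> (\<Sum>\<rho>\<in>?P. ?nu \<rho> * ((real L)^2 * (\<Sum>x<L. (h \<rho> ((x+1) mod L) - h \<rho> x)^2)))"
      by (intro sum_mono mult_left_mono path[OF L1] nu_nonneg)
    also have "\<dots> = (real L)^2 * (2 * dirichlet \<alpha> L N H)"
      unfolding DH by (simp add: sum_distrib_left mult_ac)
    finally show ?thesis .
  qed
  have "(inner_mu \<alpha> L N (gen_L \<alpha> L F) H)^2 \<le> (2 * dirichlet \<alpha> L N F) * ((real L)^2 * (2 * dirichlet \<alpha> L N H))"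
    unfolding I2
    apply (rule order_trans[OF CS2])
    unfolding A
    apply (rule mult_left_mono[OF B])
    using A[symmetric] by (simp add: sum_nonneg)
  thus ?thesis by (simp add: mult_ac)
qed

end
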